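(* Let $g$ be an invertible, ergodic measure preserving transformation of a probability space $(X,\nu)$ with no periodic points. Let $B\subset X$ be measurable with $\nu(B)>0$, and let $N:B\to\{1,2,3,\dots\}$ be a measurable function such that $\tilde g(x):=g^{N(x)}(x)\in B$ for almost every $x\in B$ and $\int_B N\,d\nu<\infty$. Let $B'\subset B$ be a measurable set with $\nu(B')>0$, $\tilde g(B')=B'$, and $g_*=\tilde g|_{B'}$ invertible and $\nu$-preserving. Let $C\subset B'$ be a measurable subset with $\nu(C)>0$ and $g_*(C)=C$. Then $$\int_C N(x)\,d\nu\ge 1.$$ *)

theory Defs
  imports "HOL-Probability.Probability"
begin

definition measure_preserving_map :: "'a measure \<Rightarrow> ('a \<Rightarrow> 'a) \<Rightarrow> bool" where
  "measure_preserving_map M T \<longleftrightarrow>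
     T \<in> measurable M M \<and> (\<forall>A\<in>sets M. emeasure M (T -` A \<inter> space M) = emeasure M A)"

definition invertible_mpt :: "'a measure \<Rightarrow> ('a \<Rightarrow> 'a) \<Rightarrow> bool" where
  "invertible_mpt M T \<longleftrightarrow>
     measure_preserving_map M T \<and> bij_betw T (space M) (space M) \<and>
     the_inv_into (space M) T \<in> measurable M M"

definition ergodic :: "'a measure \<Rightarrow> ('a \<Rightarrow> 'a) \<Rightarrow> bool" where
  "ergodic M T \<longleftrightarrow>
     (\<forall>A\<in>sets M. T -` A \<inter> space M = A \<longrightarrow> emeasure M A = 0 \<or> emeasure M A = 1)"

definition no_periodic_points :: "'a measure \<Rightarrow> ('a \<Rightarrow> 'a) \<Rightarrow> bool" where
  "no_periodic_points M T \<longleftrightarrow> (\<forall>x\<in>space M. \<forall>n::nat. n > 0 \<longrightarrow> (T ^^ n) x \<noteq> x)"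

definition induced_map :: "('a \<Rightarrow> 'a) \<Rightarrow> ('a \<Rightarrow> nat) \<Rightarrow> 'a \<Rightarrow> 'a" where
  "induced_map g N x = (g ^^ N x) x"

end

theory Submission
  imports Defs
begin

lemma funpow_mpt:
  assumes "measure_preserving_map M g"
  shows "measure_preserving_map M (g ^^ k)"
proof (induction k)
  case 0
  then show ?case unfolding measure_preserving_map_def
    by (auto simp: sets.sets_into_space Int_absorb2)
next
  case (Suc k)
  have gm: "g \<in> measurable M M" and gp: "\<And>A. A \<in> sets M \<Longrightarrow> emeasure M (g -` A \<inter> space M) = emeasure M A"
    using assms by (auto simp: measure_preserving_map_def)
  have km: "(g^^k) \<in> measurable M M" and kp: "\<And>A. A \<in> sets M \<Longrightarrow> emeasure M ((g^^k) -` A \<inter> space M) = emeasure M A"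
    using Suc by (auto simp: measure_preserving_map_def)
  have m: "(g^^Suc k) \<in> measurable M M"
    unfolding funpow_Suc_right using measurable_comp[OF gm km] by simp
  have "emeasure M ((g^^Suc k) -` A \<inter> space M) = emeasure M A" if A: "A \<in> sets M" for A
  proof -
    have "(g^^Suc k) -` A \<inter> space M = g -` ((g^^k) -` A \<inter> space M) \<inter> space M"
      unfolding funpow_Suc_right using measurable_space[OF gm] by auto
    moreover have "(g^^k) -` A \<inter> space M \<in> sets M" using km A by (rule measurable_sets)
    ultimately show ?thesis using gp kp A by metis
  qed
  with m show ?case unfolding measure_preserving_map_def by blast
qed

theorem corollary3p8:
  fixes M :: "'a measure" and g :: "'a \<Rightarrow> 'a" and N :: "'a \<Rightarrow> nat"
    and B B' C :: "'a set"
  assumes "prob_space M"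
    and "invertible_mpt M g"
    and "ergodic M g"
    and "no_periodic_points M g"
    and "B \<in> sets M" and "emeasure M B > 0"
    and "N \<in> measurable (restrict_space M B) (count_space UNIV)"
    and "\<forall>x\<in>B. N x \<ge> 1"
    and "AE x in M. x \<in> B \<longrightarrow> induced_map g N x \<in> B"
    and "(\<integral>\<^sup>+ x\<in>B. ennreal (real (N x)) \<partial>M) < \<infinity>"
    and "B' \<in> sets M" and "B' \<subseteq> B" and "emeasure M B' > 0"
    and "induced_map g N ` B' = B'"
    and "invertible_mpt (restrict_space M B') (induced_map g N)"
    and "C \<in> sets M" and "C \<subseteq> B'" and "emeasure M C > 0"
    and "induced_map g N ` C = C"
  shows "(\<integral>\<^sup>+ x\<in>C. ennreal (real (N x)) \<partial>M) \<ge> 1"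
proof -
  define S where "S = space M"
  define h where "h = the_inv_into S g"
  have mpt: "measure_preserving_map M g" and bij: "bij_betw g S S" and hm: "h \<in> measurable M M"
    using assms(2) by (auto simp: invertible_mpt_def S_def h_def)
  have inj: "inj_on g S" and gS: "g ` S = S" using bij by (auto simp: bij_betw_def)
  have gin: "x \<in> S \<Longrightarrow> g x \<in> S" for x using gS by auto
  have hin: "y \<in> S \<Longrightarrow> h y \<in> S" for y unfolding h_def using the_inv_into_into[OF inj] gS by auto
  have gh: "y \<in> S \<Longrightarrow> g (h y) = y" for y unfolding h_def using f_the_inv_into_f[OF inj] gS by auto
  have hg: "x \<in> S \<Longrightarrow> h (g x) = x" for x unfolding h_def using the_inv_into_f_f[OF inj] by auto
  have gkin: "x \<in> S \<Longrightarrow> (g^^k) x \<in> S" for x k by (induction k) (auto simp: gin)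
  have hkin: "y \<in> S \<Longrightarrow> (h^^k) y \<in> S" for y k by (induction k) (auto simp: hin)
  have rel: "x \<in> S \<Longrightarrow> y \<in> S \<Longrightarrow> (g^^k) x = y \<longleftrightarrow> x = (h^^k) y" for x y k
  proof (induction k arbitrary: x)
    case 0 then show ?case by auto
  next
    case (Suc k)
    have "(g^^Suc k) x = y \<longleftrightarrow> (g^^k) (g x) = y" by (simp only: funpow_Suc_right comp_def)
    also have "\<dots> \<longleftrightarrow> g x = (h^^k) y" using Suc gin by blast
    also have "\<dots> \<longleftrightarrow> x = h ((h^^k) y)"
      using gh hg hkin Suc.prems gin by metis
    finally show ?case by (simp add: funpow_Suc_right)
  qed
  have CS: "C \<subseteq> S" using assms(16) sets.sets_into_space S_def by blast
  have CB: "C \<subseteq> B" using assms(12,17) by auto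
  define E where "E k = {x \<in> C. k < N x}" for k
  have Esets: "E k \<in> sets M" for k
  proof -
    have "{x \<in> space (restrict_space M B). k < N x} \<in> sets (restrict_space M B)"
      using assms(7) by measurable
    then have "{x \<in> B. k < N x} \<in> sets M"
      using assms(5) by (simp add: sets_restrict_space_iff space_restrict_space)
    then have "C \<inter> {x \<in> B. k < N x} \<in> sets M" using assms(16) by auto
    moreover have "C \<inter> {x \<in> B. k < N x} = E k" using CB by (auto simp: E_def)
    ultimately show ?thesis by simp
  qed
  have ES: "E k \<subseteq> S" for k using CS by (auto simp: E_def)
  have img: "(g^^k) ` E k = (h^^k) -` E k \<inter> S" for k
  proof
    show "(g^^k) ` E k \<subseteq> (h^^k) -` E k \<inter> S"
    proof
      fix y assume "y \<in> (g^^k) ` E k"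
      then obtain x where x: "x \<in> E k" "y = (g^^k) x" by auto
      then have "x \<in> S" using ES by auto
      then have "x = (h^^k) y" using rel[of x y k] gkin x by auto
      then show "y \<in> (h^^k) -` E k \<inter> S" using x gkin \<open>x \<in> S\<close> by auto
    qed
  next
    show "(h^^k) -` E k \<inter> S \<subseteq> (g^^k) ` E k"
    proof
      fix y assume y: "y \<in> (h^^k) -` E k \<inter> S"
      then have "(g^^k) ((h^^k) y) = y" using rel[of "(h^^k) y" y k] hkin by auto
      then show "y \<in> (g^^k) ` E k" using y by (metis IntD1 image_eqI vimageE)
    qed
  qed
  have hkm: "(h^^k) \<in> measurable M M" for k
  proof (induction k)
    case (Suc k)
    show ?case using measurable_comp[OF Suc hm] by (simp add: comp_def)
  qed simp
  have Dk: "(g^^k) ` E k \<in> sets M" for k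
    unfolding img S_def using hkm Esets by (rule measurable_sets)
  have meas: "emeasure M ((g^^k) ` E k) = emeasure M (E k)" for k
  proof -
    have "(g^^k) -` ((g^^k) ` E k) \<inter> S = E k"
    proof
      show "(g^^k) -` ((g^^k) ` E k) \<inter> S \<subseteq> E k"
      proof
        fix x assume "x \<in> (g^^k) -` ((g^^k) ` E k) \<inter> S"
        then obtain z where z: "z \<in> E k" "(g^^k) x = (g^^k) z" "x \<in> S" by auto
        then have "x = (h^^k) ((g^^k) z)" using rel gkin ES by blast
        also have "\<dots> = z" using rel[of z "(g^^k) z" k] z ES gkin by (metis subsetD)
        finally show "x \<in> E k" using z by simp
      qed
    qed (use ES in auto)
    then show ?thesis using funpow_mpt[OF mpt, of k] Dk[of k]
      unfolding measure_preserving_map_def S_def by metis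
  qed
  define D where "D = (\<Union>k. (g^^k) ` E k)"
  have Dsets: "D \<in> sets M" unfolding D_def using Dk by auto
  have DS: "D \<subseteq> S" unfolding D_def using ES gkin by blast
  have N1: "x \<in> C \<Longrightarrow> N x \<ge> 1" for x using assms(8) CB by auto
  have CD: "C \<subseteq> D" unfolding D_def E_def using N1
    by (auto intro!: exI[of _ 0] simp: Suc_le_eq)
  have inv: "g -` D \<inter> space M = D"
  proof
    show "D \<subseteq> g -` D \<inter> space M"
    proof
      fix y assume "y \<in> D"
      then obtain k x where x: "x \<in> C" "k < N x" "y = (g^^k) x" unfolding D_def E_def by auto
      have "g y \<in> D"
      proof (cases "Suc k < N x")
        case True
        then show ?thesis using x unfolding D_def E_def
          by (auto intro!: exI[of _ "Suc k"] simp: image_iff)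
      next
        case False
        then have "N x = Suc k" using x by auto
        then have "g y = induced_map g N x" using x by (simp add: induced_map_def)
        then have "g y \<in> C" using x assms(19) by auto
        then show ?thesis using CD by auto
      qed
      then show "y \<in> g -` D \<inter> space M" using \<open>y \<in> D\<close> DS S_def by auto
    qed
  next
    show "g -` D \<inter> space M \<subseteq> D"
    proof
      fix y assume y: "y \<in> g -` D \<inter> space M"
      then obtain k x where x: "x \<in> C" "k < N x" "g y = (g^^k) x" unfolding D_def E_def by auto
      show "y \<in> D"
      proof (cases k)
        case (Suc j)
        then have "g y = g ((g^^j) x)" using x by (simp add: funpow_Suc_right del: funpow.simps)
          (metis comp_apply funpow_Suc_right funpow_swap1)
        then have "y = (g^^j) x" using inj y gkin CS x(1) S_def by (metis IntD2 inj_on_def subsetD)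
        then show ?thesis using x Suc unfolding D_def E_def by (auto intro!: exI[of _ j])
      next
        case 0
        then have "g y \<in> C" using x by simp
        then obtain z where z: "z \<in> C" "g y = induced_map g N z" using assms(19) by force
        obtain j where j: "N z = Suc j" using N1[OF z(1)] by (cases "N z") auto
        have "g y = g ((g^^j) z)" using z j by (simp add: induced_map_def funpow_swap1)
        then have "y = (g^^j) z" using inj y gkin CS z(1) S_def by (metis IntD2 inj_on_def subsetD)
        then show ?thesis using z j unfolding D_def E_def by (auto intro!: exI[of _ j])
      qed
    qed
  qed
  have "emeasure M D \<ge> emeasure M C" using CD Dsets by (rule emeasure_mono)
  then have "emeasure M D > 0" using assms(18) by simp
  then have D1: "emeasure M D = 1" using assms(3) Dsets inv unfolding ergodic_def by fastforce
  have "emeasure M D \<le> (\<Sum>k. emeasure M ((g^^k) ` E k))"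
    unfolding D_def using Dk by (intro emeasure_subadditive_countably) auto
  also have "\<dots> = (\<Sum>k. emeasure M (E k))" using meas by simp
  also have "\<dots> = (\<Sum>k. \<integral>\<^sup>+x. indicator (E k) x \<partial>M)" using Esets by simp
  also have "\<dots> = (\<integral>\<^sup>+x. (\<Sum>k. indicator (E k) x) \<partial>M)"
    using Esets by (intro nn_integral_suminf[symmetric]) auto
  also have "\<dots> = (\<integral>\<^sup>+ x\<in>C. ennreal (real (N x)) \<partial>M)"
  proof -
    have pw: "(\<Sum>k. indicator (E k) x :: ennreal) = ennreal (real (N x)) * indicator C x" for x
    proof -
      have "(\<Sum>k. indicator (E k) x :: ennreal) = (\<Sum>k<(if x \<in> C then N x else 0). 1)"
        by (subst suminf_finite[of "{..<(if x \<in> C then N x else 0)}"])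
          (auto simp: E_def indicator_def lessThan_def)
      also have "\<dots> = ennreal (real (N x)) * indicator C x"
        by (auto simp: indicator_def ennreal_of_nat_eq_real_of_nat)
      finally show ?thesis .
    qed
    show ?thesis by (simp add: pw)
  qed
  finally show ?thesis using D1 by simp
qed

end
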